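(* Let $g\in L^2(\mathbb{R}^3)$, $\theta\in\mathbb{R}$ and $(u_0,\alpha_0)\in L^2(\mathbb{R}^3)\oplus L^2(\mathbb{R}^3)$. If $(u_\theta,\alpha_\theta)\in C^0(\mathbb{R},L^2\oplus L^2)$ is a solution of $$u_\theta(x)=u_0(x)\exp\Big\{-i\int_0^\theta (A_g)_\tau(x)d\tau\Big\},\qquad \alpha_\theta(k)=\alpha_0(k)-ig(k)\int_0^\theta F(|u_\tau|^2)(k)d\tau,$$ then it is unique: any $(v_\theta,\beta_\theta)\in C^0(\mathbb{R},L^2\oplus L^2)$ satisfying the same system with the same initial datum equals $(u_\theta,\alpha_\theta)$.
   Context: $(A_g)_\tau(x)=\int_{\mathbb{R}^3}\big(g(k)\bar\alpha_\tau(k)e^{-ik\cdot x}+\bar g(k)\alpha_\tau(k)e^{ik\cdot x}\big)dk$ and $F(|u|^2)(k)=\int_{\mathbb{R}^3}e^{-ik\cdot x}|u(x)|^2dx$. *)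

theory Defs
  imports "HOL-Analysis.Analysis"
begin

text \<open>Elements of L^2(R^3) are represented by (Lebesgue measurable, square integrable)
  functions R^3 to C; equality in L^2 is equality almost everywhere.\<close>

definition L2 :: "(real^3 \<Rightarrow> complex) set" where
  "L2 = {f. f \<in> borel_measurable lebesgue \<and> integrable lebesgue (\<lambda>x. (cmod (f x))\<^sup>2)}"

definition L2_norm :: "(real^3 \<Rightarrow> complex) \<Rightarrow> real" where
  "L2_norm f = sqrt (integral\<^sup>L lebesgue (\<lambda>x. (cmod (f x))\<^sup>2))"

definition L2_continuous :: "(real \<Rightarrow> real^3 \<Rightarrow> complex) \<Rightarrow> bool" where
  "L2_continuous f \<longleftrightarrow> (\<forall>t. f t \<in> L2) \<and>
     (\<forall>t. ((\<lambda>s. L2_norm (\<lambda>x. f s x - f t x)) \<longlongrightarrow> 0) (at t))"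

definition A_field :: "(real^3 \<Rightarrow> complex) \<Rightarrow> (real \<Rightarrow> real^3 \<Rightarrow> complex) \<Rightarrow> real \<Rightarrow> real^3 \<Rightarrow> complex" where
  "A_field g \<alpha> \<tau> x = integral\<^sup>L lebesgue
     (\<lambda>k. g k * cnj (\<alpha> \<tau> k) * exp (- \<i> * of_real (k \<bullet> x)) + cnj (g k) * \<alpha> \<tau> k * exp (\<i> * of_real (k \<bullet> x)))"

definition Fourier :: "(real^3 \<Rightarrow> real) \<Rightarrow> real^3 \<Rightarrow> complex" where
  "Fourier h k = integral\<^sup>L lebesgue (\<lambda>x. exp (- \<i> * of_real (k \<bullet> x)) * of_real (h x))"

definition is_solution ::
  "(real^3 \<Rightarrow> complex) \<Rightarrow> (real^3 \<Rightarrow> complex) \<Rightarrow> (real^3 \<Rightarrow> complex) \<Rightarrow>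
   (real \<Rightarrow> real^3 \<Rightarrow> complex) \<Rightarrow> (real \<Rightarrow> real^3 \<Rightarrow> complex) \<Rightarrow> bool" where
  "is_solution g u0 \<alpha>0 u \<alpha> \<longleftrightarrow>
     (\<forall>\<theta>::real. AE x in lebesgue. u \<theta> x = u0 x *
        exp (- \<i> * interval_lebesgue_integral lborel (ereal 0) (ereal \<theta>) (\<lambda>\<tau>. A_field g \<alpha> \<tau> x))) \<and>
     (\<forall>\<theta>::real. AE k in lebesgue. \<alpha> \<theta> k = \<alpha>0 k -
        \<i> * g k * interval_lebesgue_integral lborel (ereal 0) (ereal \<theta>)
          (\<lambda>\<tau>. Fourier (\<lambda>x. (cmod (u \<tau> x))\<^sup>2) k))"

end

theory Submission
  imports Defs
begin

lemma Afield_real: "A_field g a t x = complex_of_real (Re (A_field g a t x))"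
proof -
  have eq: "\<And>k. g k * cnj (a t k) * exp (- \<i> * of_real (k \<bullet> x)) + cnj (g k) * a t k * exp (\<i> * of_real (k \<bullet> x))
     = complex_of_real (2 * Re (g k * cnj (a t k) * exp (- \<i> * of_real (k \<bullet> x))))"
  proof -
    fix k
    let ?z = "g k * cnj (a t k) * exp (- \<i> * of_real (k \<bullet> x))"
    have ce: "cnj (exp (- \<i> * of_real (k \<bullet> x))) = exp (\<i> * of_real (k \<bullet> x))"
      by (simp add: exp_cnj)
    have "cnj ?z = cnj (g k) * a t k * exp (\<i> * of_real (k \<bullet> x))"
      by (simp only: complex_cnj_mult ce complex_cnj_cnj)
    hence "?z + cnj (g k) * a t k * exp (\<i> * of_real (k \<bullet> x)) = ?z + cnj ?z" by (simp only:)
    also have "\<dots> = complex_of_real (2 * Re ?z)" by (rule complex_add_cnj)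
    finally show "?z + cnj (g k) * a t k * exp (\<i> * of_real (k \<bullet> x)) = complex_of_real (2 * Re ?z)" .
  qed
  show ?thesis unfolding A_field_def eq integral_complex_of_real by simp
qed

lemma phase_norm:
  "cmod (exp (- \<i> * interval_lebesgue_integral lborel (ereal 0) (ereal th) (\<lambda>\<tau>. A_field g a \<tau> x))) = 1"
proof -
  have "(\<lambda>\<tau>. A_field g a \<tau> x) = (\<lambda>\<tau>. complex_of_real (Re (A_field g a \<tau> x)))"
    by (rule ext, rule Afield_real)
  hence "interval_lebesgue_integral lborel (ereal 0) (ereal th) (\<lambda>\<tau>. A_field g a \<tau> x)
     = complex_of_real (interval_lebesgue_integral lborel (ereal 0) (ereal th) (\<lambda>\<tau>. Re (A_field g a \<tau> x)))"
    by (simp add: interval_lebesgue_integral_of_real)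
  thus ?thesis by simp
qed

theorem proposition3:
  fixes g u0 \<alpha>0 :: "real^3 \<Rightarrow> complex"
    and u \<alpha> v \<beta> :: "real \<Rightarrow> real^3 \<Rightarrow> complex"
  assumes "g \<in> L2" and "u0 \<in> L2" and "\<alpha>0 \<in> L2"
    and "L2_continuous u" and "L2_continuous \<alpha>" and "is_solution g u0 \<alpha>0 u \<alpha>"
    and "L2_continuous v" and "L2_continuous \<beta>" and "is_solution g u0 \<alpha>0 v \<beta>"
  shows "\<forall>\<theta>::real. (AE x in lebesgue. v \<theta> x = u \<theta> x) \<and> (AE k in lebesgue. \<beta> \<theta> k = \<alpha> \<theta> k)"
proof -
  have um: "\<And>t. u t \<in> borel_measurable lebesgue" using assms(4) by (simp add: L2_continuous_def L2_def)
  have vm: "\<And>t. v t \<in> borel_measurable lebesgue" using assms(7) by (simp add: L2_continuous_def L2_def)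
  have am: "\<And>t. \<alpha> t \<in> borel_measurable lebesgue" using assms(5) by (simp add: L2_continuous_def L2_def)
  have bm: "\<And>t. \<beta> t \<in> borel_measurable lebesgue" using assms(8) by (simp add: L2_continuous_def L2_def)
  have gm: "g \<in> borel_measurable lebesgue" using assms(1) by (simp add: L2_def)
  have FU: "Fourier (\<lambda>x. (cmod (u \<tau> x))\<^sup>2) k = Fourier (\<lambda>x. (cmod (u0 x))\<^sup>2) k"
    if um: "\<And>t. u t \<in> borel_measurable lebesgue"
      and sol: "is_solution g u0 \<alpha>0 u \<alpha>'" for u :: "real \<Rightarrow> real^3 \<Rightarrow> complex" and \<alpha>' \<tau> k
  proof -
    have idm: "(\<lambda>x::real^3. x) \<in> borel_measurable lebesgue"
      using id_borel_measurable_lebesgue by (simp add: id_def)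
    have ae: "AE x in lebesgue. u \<tau> x = u0 x *
        exp (- \<i> * interval_lebesgue_integral lborel (ereal 0) (ereal \<tau>) (\<lambda>\<tau>. A_field g \<alpha>' \<tau> x))"
      using sol by (simp add: is_solution_def)
    have ae2: "AE x in lebesgue. (cmod (u \<tau> x))\<^sup>2 = (cmod (u0 x))\<^sup>2"
      using ae proof eventually_elim
      case (elim x) thus ?case by (simp only: norm_mult phase_norm mult_1_right)
    qed
    have u0m: "u0 \<in> borel_measurable lebesgue" using assms(2) by (simp add: L2_def)
    have m1: "(\<lambda>x. exp (- \<i> * of_real (k \<bullet> x)) * complex_of_real ((cmod (u \<tau> x))\<^sup>2)) \<in> borel_measurable lebesgue"
      using um[of \<tau>] idm by measurable
    have m2: "(\<lambda>x. exp (- \<i> * of_real (k \<bullet> x)) * complex_of_real ((cmod (u0 x))\<^sup>2)) \<in> borel_measurable lebesgue"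
      using u0m idm by measurable
    have ae3: "AE x in lebesgue. exp (- \<i> * of_real (k \<bullet> x)) * complex_of_real ((cmod (u \<tau> x))\<^sup>2)
       = exp (- \<i> * of_real (k \<bullet> x)) * complex_of_real ((cmod (u0 x))\<^sup>2)"
      using ae2 by eventually_elim simp
    show ?thesis unfolding Fourier_def by (rule integral_cong_AE[OF m1 m2 ae3])
  qed
  have FUV: "\<And>\<tau> k. Fourier (\<lambda>x. (cmod (u \<tau> x))\<^sup>2) k = Fourier (\<lambda>x. (cmod (v \<tau> x))\<^sup>2) k"
    using FU[OF um assms(6)] FU[OF vm assms(9)] by simp
  have AB: "AE k in lebesgue. \<beta> \<theta> k = \<alpha> \<theta> k" for \<theta>
  proof -
    have "AE k in lebesgue. \<alpha> \<theta> k = \<alpha>0 k -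
        \<i> * g k * interval_lebesgue_integral lborel (ereal 0) (ereal \<theta>)
          (\<lambda>\<tau>. Fourier (\<lambda>x. (cmod (u \<tau> x))\<^sup>2) k)"
      using assms(6) by (simp add: is_solution_def)
    moreover have "AE k in lebesgue. \<beta> \<theta> k = \<alpha>0 k -
        \<i> * g k * interval_lebesgue_integral lborel (ereal 0) (ereal \<theta>)
          (\<lambda>\<tau>. Fourier (\<lambda>x. (cmod (v \<tau> x))\<^sup>2) k)"
      using assms(9) by (simp add: is_solution_def)
    ultimately show ?thesis by eventually_elim (simp add: FUV)
  qed
  have idm: "(\<lambda>x::real^3. x) \<in> borel_measurable lebesgue"
    using id_borel_measurable_lebesgue by (simp add: id_def)
  have cnjm: "\<And>f. f \<in> borel_measurable lebesgue \<Longrightarrow> (\<lambda>x. cnj (f x)) \<in> borel_measurable lebesgue"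
    by (rule borel_measurable_continuous_on[OF continuous_on_cnj[OF continuous_on_id]])
  have expm: "\<And>c x. (\<lambda>k::real^3. exp (c * complex_of_real (k \<bullet> x))) \<in> borel_measurable lebesgue"
  proof -
    fix c :: complex and x :: "real^3"
    have "continuous_on UNIV (\<lambda>k::real^3. exp (c * complex_of_real (k \<bullet> x)))"
      by (intro continuous_intros)
    from borel_measurable_continuous_on[OF this idm] show "?thesis c x" by simp
  qed
  have AF: "A_field g \<alpha> \<tau> x = A_field g \<beta> \<tau> x" for \<tau> x
  proof -
    have m1: "(\<lambda>k. g k * cnj (\<alpha> \<tau> k) * exp (- \<i> * of_real (k \<bullet> x)) + cnj (g k) * \<alpha> \<tau> k * exp (\<i> * of_real (k \<bullet> x))) \<in> borel_measurable lebesgue"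
      using gm am[of \<tau>] cnjm[OF gm] cnjm[OF am[of \<tau>]] expm[of "- \<i>" x] expm[of \<i> x] by measurable
    have m2: "(\<lambda>k. g k * cnj (\<beta> \<tau> k) * exp (- \<i> * of_real (k \<bullet> x)) + cnj (g k) * \<beta> \<tau> k * exp (\<i> * of_real (k \<bullet> x))) \<in> borel_measurable lebesgue"
      using gm bm[of \<tau>] cnjm[OF gm] cnjm[OF bm[of \<tau>]] expm[of "- \<i>" x] expm[of \<i> x] by measurable
    have ae: "AE k in lebesgue. g k * cnj (\<alpha> \<tau> k) * exp (- \<i> * of_real (k \<bullet> x)) + cnj (g k) * \<alpha> \<tau> k * exp (\<i> * of_real (k \<bullet> x))
       = g k * cnj (\<beta> \<tau> k) * exp (- \<i> * of_real (k \<bullet> x)) + cnj (g k) * \<beta> \<tau> k * exp (\<i> * of_real (k \<bullet> x))"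
      using AB[of \<tau>] by eventually_elim simp
    show ?thesis unfolding A_field_def by (rule integral_cong_AE[OF m1 m2 ae])
  qed
  show ?thesis
  proof (intro allI conjI)
    fix \<theta> :: real
    show "AE k in lebesgue. \<beta> \<theta> k = \<alpha> \<theta> k" by (rule AB)
    have "AE x in lebesgue. u \<theta> x = u0 x *
        exp (- \<i> * interval_lebesgue_integral lborel (ereal 0) (ereal \<theta>) (\<lambda>\<tau>. A_field g \<alpha> \<tau> x))"
      using assms(6) by (simp add: is_solution_def)
    moreover have "AE x in lebesgue. v \<theta> x = u0 x *
        exp (- \<i> * interval_lebesgue_integral lborel (ereal 0) (ereal \<theta>) (\<lambda>\<tau>. A_field g \<beta> \<tau> x))"
      using assms(9) by (simp add: is_solution_def)
    ultimately show "AE x in lebesgue. v \<theta> x = u \<theta> x" by eventually_elim (simp add: AF)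
  qed
qed

end
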